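(* Let $B\colon\mathbb R^{2m}\to\mathbb R^{2m}$ be a linear map with no real eigenvalues, and consider the nondegenerate line fibration of $\mathbb R^{2m+1}$ it generates. This fibration corresponds to a (continuous) great circle fibration of $S^{2m+1}$ if and only if $B$ is invariant on planes.
   Context: Write $\mathbb R^{2m+1}=\mathbb R^{2m}\times\mathbb R$; $B$ generates the family of oriented lines $\{(y+tB(y),\,t):t\in\mathbb R\}$, $y\in\mathbb R^{2m}$, which is a smooth nondegenerate line fibration of $\mathbb R^{2m+1}$ since $B$ has no real eigenvalues. Identify $\mathbb R^{2m+1}$ with the hyperplane $\{x_{2m+2}=1\}\subset\mathbb R^{2m+2}$ tangent to $S^{2m+1}$ at the north pole; each line $\ell$ of the fibration determines the great circle $S^{2m+1}\cap\alpha(\ell)$, where $\alpha(\ell)$ is the linear span of $\ell\times\{1\}$. The fibration corresponds to a great circle fibration if there exists a continuous fibration of $S^{2m+1}$ by oriented great circles whose fibers meeting the open upper hemisphere $\{x_{2m+2}>0\}$ are exactly these great circles. A linear map $B$ with no real eigenvalues is invariant on planes if $B^2(u)\in\mathrm{Span}\{u,B(u)\}$ for every nonzero $u\in\mathbb R^{2m}$. *)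

theory Defs
  imports "HOL-Analysis.Analysis"
begin

text \<open>R^{2m} is modelled by a Euclidean space 'a with even dimension;
  R^{2m+1} = 'a \<times> real (last coordinate t), and
  R^{2m+2} = 'a \<times> real \<times> real, the last component being x_{2m+2}.\<close>

definition no_real_eigenvalue :: "('a::real_vector \<Rightarrow> 'a) \<Rightarrow> bool" where
  "no_real_eigenvalue B \<longleftrightarrow> (\<forall>(c::real) u. u \<noteq> 0 \<longrightarrow> B u \<noteq> c *\<^sub>R u)"

definition invariant_on_planes :: "('a::real_vector \<Rightarrow> 'a) \<Rightarrow> bool" where
  "invariant_on_planes B \<longleftrightarrow> (\<forall>u. u \<noteq> 0 \<longrightarrow> B (B u) \<in> span {u, B u})"

text \<open>An oriented great circle through orthonormal a, b (positively oriented
  from a towards b) is represented by its lift to the unit tangent bundle: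
  the set of pairs (point, unit tangent vector in the direction of the orientation).\<close>

definition ogc :: "'v::real_vector \<Rightarrow> 'v \<Rightarrow> ('v \<times> 'v) set" where
  "ogc a b = (\<lambda>\<theta>::real. (cos \<theta> *\<^sub>R a + sin \<theta> *\<^sub>R b, (- sin \<theta>) *\<^sub>R a + cos \<theta> *\<^sub>R b)) ` UNIV"

definition oriented_great_circle :: "('v::real_inner \<times> 'v) set \<Rightarrow> bool" where
  "oriented_great_circle C \<longleftrightarrow>
     (\<exists>a b. norm a = 1 \<and> norm b = 1 \<and> inner a b = 0 \<and> C = ogc a b)"

definition ogc_of_plane :: "'v::real_inner \<Rightarrow> 'v \<Rightarrow> ('v \<times> 'v) set" where
  "ogc_of_plane u w = ogc (sgn u) (sgn (w - (inner w u / inner u u) *\<^sub>R u))"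

text \<open>Continuous fibration of the unit sphere by oriented great circles:
  every point of the sphere lies on exactly one fiber, and the fibers depend
  continuously on the point (the unit tangent field of the fibers is continuous).\<close>

definition great_circle_fibration :: "('v::real_inner \<times> 'v) set set \<Rightarrow> bool" where
  "great_circle_fibration F \<longleftrightarrow>
     (\<forall>C\<in>F. oriented_great_circle C) \<and>
     (\<forall>p\<in>sphere (0::'v) 1. \<exists>!C. C \<in> F \<and> p \<in> fst ` C) \<and>
     (\<exists>v. continuous_on (sphere (0::'v) 1) v \<and> (\<forall>C\<in>F. \<forall>(p, w)\<in>C. v p = w))"

text \<open>The oriented line {(y + t B y, t) : t} of the fibration generated by B, placed in
  the hyperplane x_{2m+2} = 1 as t \<mapsto> (y,0,1) + t (B y,1,0), gives the oriented
  great circle S \<inter> span{(y,0,1),(B y,1,0)}, oriented by increasing t.\<close>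

definition line_great_circle ::
  "('a::euclidean_space \<Rightarrow> 'a) \<Rightarrow> 'a \<Rightarrow> (('a \<times> real \<times> real) \<times> ('a \<times> real \<times> real)) set" where
  "line_great_circle B y = ogc_of_plane (y, 0, 1) (B y, 1, 0)"

definition corresponds_to_great_circle_fibration :: "('a::euclidean_space \<Rightarrow> 'a) \<Rightarrow> bool" where
  "corresponds_to_great_circle_fibration B \<longleftrightarrow>
     (\<exists>F. great_circle_fibration F \<and>
          {C \<in> F. \<exists>pw\<in>C. snd (snd (fst pw)) > 0} = range (line_great_circle B))"

end

theory Submission
  imports Defs
begin


lemma inner_comb:
  fixes a b :: "'v::real_inner"
  assumes "norm a = 1" "norm b = 1" "inner a b = 0"
  shows "inner (x *\<^sub>R a + y *\<^sub>R b) (x' *\<^sub>R a + y' *\<^sub>R b) = x * x' + y * y'"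
proof -
  have aa: "inner a a = 1" using assms(1) by (metis norm_eq_sqrt_inner real_sqrt_eq_1_iff)
  have bb: "inner b b = 1" using assms(2) by (metis norm_eq_sqrt_inner real_sqrt_eq_1_iff)
  have ba: "inner b a = 0" using assms(3) by (simp add: inner_commute)
  show ?thesis by (simp add: inner_add_left inner_add_right aa bb assms(3) ba)
qed

lemma norm_comb:
  fixes a b :: "'v::real_inner"
  assumes "norm a = 1" "norm b = 1" "inner a b = 0"
  shows "norm (x *\<^sub>R a + y *\<^sub>R b) = sqrt (x\<^sup>2 + y\<^sup>2)"
  using inner_comb[OF assms, of x y x y] by (simp add: norm_eq_sqrt_inner power2_eq_square)

lemma ogc_mem: "(cos t *\<^sub>R a + sin t *\<^sub>R b, (- sin t) *\<^sub>R a + cos t *\<^sub>R b) \<in> ogc a b"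
  unfolding ogc_def by blast

lemma ogcG:
  fixes a b :: "'v::real_inner"
  assumes on: "norm a = 1" "norm b = 1" "inner a b = 0"
    and X: "X = \<alpha> *\<^sub>R a + \<beta> *\<^sub>R b" and Xn: "X \<noteq> 0"
    and Q: "Q = \<gamma> *\<^sub>R a + \<delta> *\<^sub>R b" and D: "\<alpha> * \<delta> - \<beta> * \<gamma> > 0"
  shows "(sgn X, sgn (Q - (inner Q X / inner X X) *\<^sub>R X)) \<in> ogc a b"
proof -
  define r where "r = sqrt (\<alpha>\<^sup>2 + \<beta>\<^sup>2)"
  have nX: "norm X = r" unfolding X r_def by (rule norm_comb[OF on])
  have rpos: "r > 0" using Xn nX by auto
  have r2: "r\<^sup>2 = \<alpha>\<^sup>2 + \<beta>\<^sup>2" unfolding r_def by simp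
  have rr: "(\<alpha>/r)\<^sup>2 + (\<beta>/r)\<^sup>2 = (\<alpha>\<^sup>2 + \<beta>\<^sup>2) / r\<^sup>2" by (simp add: power_divide add_divide_distrib)
  have ab: "\<alpha> \<noteq> 0 \<or> \<beta> \<noteq> 0" using rpos unfolding r_def by auto
  have "(\<alpha>/r)\<^sup>2 + (\<beta>/r)\<^sup>2 = 1" unfolding rr r2[symmetric] using rpos by simp
  then obtain t where ct: "\<alpha>/r = cos t" and st: "\<beta>/r = sin t" by (metis sincos_total_2pi)
  have "sgn X = inverse r *\<^sub>R X" using nX by (simp add: sgn_div_norm)
  also have "\<dots> = cos t *\<^sub>R a + sin t *\<^sub>R b"
    unfolding X ct[symmetric] st[symmetric] by (simp add: scaleR_add_right divide_inverse_commute)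
  finally have s1: "sgn X = cos t *\<^sub>R a + sin t *\<^sub>R b" .
  have XX: "inner X X = r\<^sup>2" using inner_comb[OF on, of \<alpha> \<beta> \<alpha> \<beta>] r2 X by (simp add: power2_eq_square)
  have QX: "inner Q X = \<gamma> * \<alpha> + \<delta> * \<beta>" using inner_comb[OF on, of \<gamma> \<delta> \<alpha> \<beta>] X Q by simp
  define D where "D = \<alpha> * \<delta> - \<beta> * \<gamma>"
  have "Q - (inner Q X / inner X X) *\<^sub>R X
      = (\<gamma> - (\<gamma> * \<alpha> + \<delta> * \<beta>) / r\<^sup>2 * \<alpha>) *\<^sub>R a + (\<delta> - (\<gamma> * \<alpha> + \<delta> * \<beta>) / r\<^sup>2 * \<beta>) *\<^sub>R b"
    unfolding XX QX by (simp add: X Q algebra_simps)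
  also have "\<gamma> - (\<gamma> * \<alpha> + \<delta> * \<beta>) / r\<^sup>2 * \<alpha> = (D / r) * (- sin t)"
  proof -
    have "\<gamma> - (\<gamma> * \<alpha> + \<delta> * \<beta>) / r\<^sup>2 * \<alpha> = (\<gamma> * r\<^sup>2 - (\<gamma> * \<alpha> + \<delta> * \<beta>) * \<alpha>) / r\<^sup>2"
      using rpos by (simp add: field_simps)
    also have "\<gamma> * r\<^sup>2 - (\<gamma> * \<alpha> + \<delta> * \<beta>) * \<alpha> = - (D * \<beta>)"
      unfolding r2 D_def by (simp add: algebra_simps power2_eq_square)
    also have "- (D * \<beta>) / r\<^sup>2 = (D / r) * (- sin t)" unfolding st[symmetric] by (simp add: power2_eq_square)
    finally show ?thesis .
  qed
  also have "\<delta> - (\<gamma> * \<alpha> + \<delta> * \<beta>) / r\<^sup>2 * \<beta> = (D / r) * cos t"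
  proof -
    have "\<delta> - (\<gamma> * \<alpha> + \<delta> * \<beta>) / r\<^sup>2 * \<beta> = (\<delta> * r\<^sup>2 - (\<gamma> * \<alpha> + \<delta> * \<beta>) * \<beta>) / r\<^sup>2"
      using rpos by (simp add: field_simps)
    also have "\<delta> * r\<^sup>2 - (\<gamma> * \<alpha> + \<delta> * \<beta>) * \<beta> = D * \<alpha>"
      unfolding r2 D_def by (simp add: algebra_simps power2_eq_square)
    also have "D * \<alpha> / r\<^sup>2 = (D / r) * cos t" unfolding ct[symmetric] by (simp add: power2_eq_square)
    finally show ?thesis .
  qed
  finally have "Q - (inner Q X / inner X X) *\<^sub>R X = (D / r) *\<^sub>R ((- sin t) *\<^sub>R a + cos t *\<^sub>R b)"
    by (simp add: scaleR_add_right scaleR_diff_right)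
  moreover have "norm ((- sin t) *\<^sub>R a + cos t *\<^sub>R b) = 1"
    using norm_comb[OF on, of "- sin t" "cos t"] by simp
  ultimately have s2: "sgn (Q - (inner Q X / inner X X) *\<^sub>R X) = (- sin t) *\<^sub>R a + cos t *\<^sub>R b"
    using D rpos unfolding D_def by (simp add: sgn_scaleR sgn_div_norm)
  show ?thesis unfolding s1 s2 by (rule ogc_mem)
qed

lemma ogc_point_mem:
  fixes a b :: "'v::real_inner"
  assumes on: "norm a = 1" "norm b = 1" "inner a b = 0"
    and Xn: "\<alpha> *\<^sub>R a + \<beta> *\<^sub>R b \<noteq> 0"
  shows "sgn (\<alpha> *\<^sub>R a + \<beta> *\<^sub>R b) \<in> fst ` ogc a b"
proof -
  have "\<alpha> * \<alpha> - \<beta> * (- \<beta>) > 0"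
  proof -
    have "\<alpha> \<noteq> 0 \<or> \<beta> \<noteq> 0" using Xn by auto
    then show ?thesis using sum_squares_gt_zero_iff[of \<alpha> \<beta>] by simp
  qed
  from ogcG[OF on refl Xn refl this] show ?thesis by force
qed

lemma ogc_tangent_unique:
  fixes a b :: "'v::real_inner"
  assumes on: "norm a = 1" "norm b = 1" "inner a b = 0"
    and "(q, w1) \<in> ogc a b" "(q, w2) \<in> ogc a b"
  shows "w1 = w2"
proof -
  obtain t1 where 1: "q = cos t1 *\<^sub>R a + sin t1 *\<^sub>R b" "w1 = (- sin t1) *\<^sub>R a + cos t1 *\<^sub>R b"
    using assms(4) unfolding ogc_def by auto
  obtain t2 where 2: "q = cos t2 *\<^sub>R a + sin t2 *\<^sub>R b" "w2 = (- sin t2) *\<^sub>R a + cos t2 *\<^sub>R b"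
    using assms(5) unfolding ogc_def by auto
  have "inner q (1 *\<^sub>R a + 0 *\<^sub>R b) = cos t1" "inner q (0 *\<^sub>R a + 1 *\<^sub>R b) = sin t1"
    using inner_comb[OF on, of "cos t1" "sin t1" 1 0] inner_comb[OF on, of "cos t1" "sin t1" 0 1] 1 by auto
  moreover have "inner q (1 *\<^sub>R a + 0 *\<^sub>R b) = cos t2" "inner q (0 *\<^sub>R a + 1 *\<^sub>R b) = sin t2"
    using inner_comb[OF on, of "cos t2" "sin t2" 1 0] inner_comb[OF on, of "cos t2" "sin t2" 0 1] 2 by auto
  ultimately show ?thesis using 1 2 by simp
qed

lemma ogc_rotate:
  fixes a b :: "'v::real_inner"
  assumes "(q, w) \<in> ogc a b"
  shows "ogc q w = ogc a b"
proof -
  obtain t where t: "q = cos t *\<^sub>R a + sin t *\<^sub>R b" "w = (- sin t) *\<^sub>R a + cos t *\<^sub>R b"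
    using assms unfolding ogc_def by auto
  define f where "f = (\<lambda>\<theta>::real. (cos \<theta> *\<^sub>R a + sin \<theta> *\<^sub>R b, (- sin \<theta>) *\<^sub>R a + cos \<theta> *\<^sub>R b))"
  have key: "(cos \<phi> *\<^sub>R q + sin \<phi> *\<^sub>R w, (- sin \<phi>) *\<^sub>R q + cos \<phi> *\<^sub>R w) = f (t + \<phi>)" for \<phi>
    unfolding f_def t by (simp add: cos_add sin_add algebra_simps)
  have "ogc q w = (\<lambda>\<phi>. f (t + \<phi>)) ` UNIV" unfolding ogc_def key by simp
  also have "\<dots> = f ` UNIV"
  proof
    show "(\<lambda>\<phi>. f (t + \<phi>)) ` UNIV \<subseteq> f ` UNIV" by auto
    show "f ` UNIV \<subseteq> (\<lambda>\<phi>. f (t + \<phi>)) ` UNIV"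
    proof
      fix z assume "z \<in> f ` UNIV"
      then obtain s where "z = f s" by auto
      then have "z = f (t + (s - t))" by simp
      then show "z \<in> (\<lambda>\<phi>. f (t + \<phi>)) ` UNIV" by blast
    qed
  qed
  finally show ?thesis unfolding ogc_def f_def .
qed



lemma span2: "(x::'a::real_vector) \<in> span {u, w} \<longleftrightarrow> (\<exists>a b. x = a *\<^sub>R u + b *\<^sub>R w)"
proof
  assume "x \<in> span {u, w}"
  then obtain a where "x - a *\<^sub>R u \<in> span {w}" by (auto simp: span_breakdown_eq)
  then obtain b where "x - a *\<^sub>R u = b *\<^sub>R w" by (auto simp: span_singleton)
  then show "\<exists>a b. x = a *\<^sub>R u + b *\<^sub>R w" by (metis diff_add_cancel add.commute)
next
  assume "\<exists>a b. x = a *\<^sub>R u + b *\<^sub>R w"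
  then obtain a b where "x = a *\<^sub>R u + b *\<^sub>R w" by blast
  moreover have "a *\<^sub>R u + b *\<^sub>R w \<in> span {u, w}"
    by (intro span_add span_scale span_base) auto
  ultimately show "x \<in> span {u, w}" by simp
qed

context
  fixes B :: "'a::euclidean_space \<Rightarrow> 'a"
  assumes lin: "linear B" and ne: "no_real_eigenvalue B"
begin

lemma indep: "u \<noteq> 0 \<Longrightarrow> a *\<^sub>R u + b *\<^sub>R B u = 0 \<Longrightarrow> a = 0 \<and> b = 0"
proof -
  assume u: "u \<noteq> 0" and e: "a *\<^sub>R u + b *\<^sub>R B u = 0"
  have "b = 0"
  proof (rule ccontr)
    assume "b \<noteq> 0"
    have "b *\<^sub>R B u = - (a *\<^sub>R u)" using e by (simp add: eq_neg_iff_add_eq_0 add.commute)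
    then have "(1/b) *\<^sub>R (b *\<^sub>R B u) = (1/b) *\<^sub>R (- (a *\<^sub>R u))" by simp
    then have "B u = (- a / b) *\<^sub>R u" using \<open>b \<noteq> 0\<close> by simp
    then show False using ne u unfolding no_real_eigenvalue_def by blast
  qed
  then show ?thesis using e u by simp
qed

lemma uniq: "u \<noteq> 0 \<Longrightarrow> x *\<^sub>R u + y *\<^sub>R B u = x' *\<^sub>R u + y' *\<^sub>R B u \<Longrightarrow> x = x' \<and> y = y'"
  using indep[of u "x - x'" "y - y'"] by (simp add: algebra_simps)

lemma extend:
  assumes "B (B u) = x *\<^sub>R u + y *\<^sub>R B u"
  shows "B (B (a *\<^sub>R u + b *\<^sub>R B u)) = x *\<^sub>R (a *\<^sub>R u + b *\<^sub>R B u) + y *\<^sub>R B (a *\<^sub>R u + b *\<^sub>R B u)"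
proof -
  have "B (B (B u)) = x *\<^sub>R B u + y *\<^sub>R B (B u)" using assms lin by (simp add: linear_add linear_scale)
  then show ?thesis using assms lin by (simp add: linear_add linear_scale algebra_simps)
qed

lemma global_rel:
  assumes inv: "invariant_on_planes B"
  shows "\<exists>x y. \<forall>u. B (B u) = x *\<^sub>R u + y *\<^sub>R B u"
proof -
  have ex: "\<exists>x y. B (B u) = x *\<^sub>R u + y *\<^sub>R B u" if "u \<noteq> 0" for u
    using inv that unfolding invariant_on_planes_def span2 by blast
  define X where "X u = (SOME xy. B (B u) = fst xy *\<^sub>R u + snd xy *\<^sub>R B u)" for u
  have X: "B (B u) = fst (X u) *\<^sub>R u + snd (X u) *\<^sub>R B u" if "u \<noteq> 0" for u
    unfolding X_def by (rule someI_ex) (use ex[OF that] in auto)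
  have Xu: "X u = (x, y)" if "u \<noteq> 0" "B (B u) = x *\<^sub>R u + y *\<^sub>R B u" for u x y
    using uniq[OF that(1), of "fst (X u)" "snd (X u)" x y] X[OF that(1)] that(2) by (simp add: prod_eq_iff)
  have same: "X u = X w" if "u \<noteq> 0" "w \<noteq> 0" for u w
  proof (cases "u + w = 0")
    case True
    then have w: "w = (-1) *\<^sub>R u + 0 *\<^sub>R B u" by (simp add: add_eq_0_iff)
    show ?thesis using extend[OF X[OF that(1)], of "-1" 0] Xu[OF that(2)] w by simp
  next
    case False
    obtain x1 y1 where 1: "X u = (x1, y1)" by (cases "X u")
    obtain x2 y2 where 2: "X w = (x2, y2)" by (cases "X w")
    obtain x3 y3 where 3: "X (u + w) = (x3, y3)" by (cases "X (u+w)")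
    have e1: "B (B u) = x1 *\<^sub>R u + y1 *\<^sub>R B u" using X[OF that(1)] 1 by simp
    have e2: "B (B w) = x2 *\<^sub>R w + y2 *\<^sub>R B w" using X[OF that(2)] 2 by simp
    have e3: "B (B (u + w)) = x3 *\<^sub>R (u + w) + y3 *\<^sub>R B (u + w)" using X[OF False] 3 by simp
    define z where "z = (x3 - x1) *\<^sub>R u + (y3 - y1) *\<^sub>R B u"
    have z2: "z = (x2 - x3) *\<^sub>R w + (y2 - y3) *\<^sub>R B w"
      using e1 e2 e3 lin unfolding z_def by (simp add: linear_add algebra_simps)
    show ?thesis
    proof (cases "z = 0")
      case True
      then show ?thesis using indep[OF that(1), of "x3 - x1" "y3 - y1"] indep[OF that(2), of "x2 - x3" "y2 - y3"]
        1 2 z2 unfolding z_def by simp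
    next
      case zn: False
      have "B (B z) = x1 *\<^sub>R z + y1 *\<^sub>R B z" unfolding z_def by (rule extend[OF e1])
      then have "X z = (x1, y1)" using Xu[OF zn] by blast
      moreover have "B (B z) = x2 *\<^sub>R z + y2 *\<^sub>R B z" unfolding z2 by (rule extend[OF e2])
      then have "X z = (x2, y2)" using Xu[OF zn] by blast
      ultimately show ?thesis using 1 2 by simp
    qed
  qed
  obtain u0 :: 'a where u0: "u0 \<noteq> 0" using nonzero_Basis SOME_Basis by blast
  show ?thesis
  proof (intro exI allI)
    fix u
    show "B (B u) = fst (X u0) *\<^sub>R u + snd (X u0) *\<^sub>R B u"
      using X[of u] same[OF _ u0, of u] lin by (cases "u = 0") (auto simp: linear_0)
  qed
qed

end



definition vf :: "('v::real_inner \<Rightarrow> 'v) \<Rightarrow> 'v \<Rightarrow> 'v" where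
  "vf K p = sgn (K p - inner (K p) p *\<^sub>R p)"

locale cstruct =
  fixes K :: "'v::euclidean_space \<Rightarrow> 'v"
  assumes linK: "linear K" and KK: "\<And>x. K (K x) = - x"
begin

lemma K_not_par: "x \<noteq> 0 \<Longrightarrow> K x - c *\<^sub>R x \<noteq> 0"
proof
  assume x: "x \<noteq> 0" and "K x - c *\<^sub>R x = 0"
  then have Kx: "K x = c *\<^sub>R x" by simp
  have "- x = K (K x)" by (simp add: KK)
  also have "\<dots> = (c * c) *\<^sub>R x" using Kx linK by (simp add: linear_scale)
  finally have "(c * c + 1) *\<^sub>R x = 0" by (simp add: algebra_simps) (metis add.commute add_eq_0_iff scaleR_add_left scaleR_one)
  moreover have "c * c + 1 \<noteq> 0" by (smt (verit) zero_le_square)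
  ultimately show False using x by simp
qed

lemma vf_scale:
  assumes X: "X \<noteq> 0"
  shows "vf K (sgn X) = sgn (K X - (inner (K X) X / inner X X) *\<^sub>R X)"
proof -
  define r where "r = norm X"
  have r: "r > 0" using X unfolding r_def by simp
  have sX: "sgn X = (1/r) *\<^sub>R X" unfolding r_def by (simp add: sgn_div_norm divide_inverse_commute)
  have XX: "inner X X = r * r" unfolding r_def by (simp add: dot_square_norm power2_eq_square)
  have "K (sgn X) - inner (K (sgn X)) (sgn X) *\<^sub>R sgn X
      = (1/r) *\<^sub>R (K X - (inner (K X) X / inner X X) *\<^sub>R X)"
    unfolding sX XX using linK r by (simp add: linear_scale algebra_simps)
  then show ?thesis unfolding vf_def using r by (simp add: sgn_scaleR)
qed

lemma vf_on:
  assumes p: "norm p = 1"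
  shows "norm (vf K p) = 1" "inner p (vf K p) = 0"
proof -
  have pp: "inner p p = 1" using p by (simp add: dot_square_norm)
  have p0: "p \<noteq> 0" using p by auto
  show "norm (vf K p) = 1" unfolding vf_def using K_not_par[OF p0] by (simp add: norm_sgn)
  have "inner p (K p - inner (K p) p *\<^sub>R p) = 0" using pp by (simp add: inner_diff_right inner_commute)
  then show "inner p (vf K p) = 0" unfolding vf_def sgn_div_norm by simp
qed

lemma vf_consistent:
  assumes p: "norm p = 1" and qw: "(q, w) \<in> ogc p (vf K p)"
  shows "w = vf K q"
proof -
  define b where "b = vf K p"
  have on: "norm p = 1" "norm b = 1" "inner p b = 0" using vf_on[OF p] p unfolding b_def by auto
  have pp: "inner p p = 1" using p by (simp add: dot_square_norm)
  have p0: "p \<noteq> 0" using p by auto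
  define \<kappa> where "\<kappa> = inner (K p) p"
  define n where "n = norm (K p - \<kappa> *\<^sub>R p)"
  have n: "n > 0" unfolding n_def using K_not_par[OF p0] by simp
  have bdef: "b = (1/n) *\<^sub>R (K p - \<kappa> *\<^sub>R p)" unfolding b_def vf_def \<kappa>_def n_def
    by (simp add: sgn_div_norm divide_inverse_commute)
  have Kp: "K p = \<kappa> *\<^sub>R p + n *\<^sub>R b" unfolding bdef using n by simp
  have Kb: "K b = (- (1 + \<kappa> * \<kappa>) / n) *\<^sub>R p + (- \<kappa>) *\<^sub>R b"
  proof -
    have "K b = (1/n) *\<^sub>R (K (K p) - \<kappa> *\<^sub>R K p)" unfolding bdef using linK by (simp add: linear_scale linear_diff)
    also have "\<dots> = (1/n) *\<^sub>R (- p - \<kappa> *\<^sub>R (\<kappa> *\<^sub>R p + n *\<^sub>R b))" unfolding KK Kp[symmetric] by simp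
    also have "\<dots> = (1/n) *\<^sub>R ((- 1 - \<kappa> * \<kappa>) *\<^sub>R p + (- \<kappa> * n) *\<^sub>R b)"
      by (simp add: algebra_simps)
    also have "\<dots> = (- (1 + \<kappa> * \<kappa>) / n) *\<^sub>R p + (- \<kappa>) *\<^sub>R b" using n by (simp add: scaleR_add_right scaleR_diff_right)

    finally show ?thesis .
  qed
  obtain t where t: "q = cos t *\<^sub>R p + sin t *\<^sub>R b" "w = (- sin t) *\<^sub>R p + cos t *\<^sub>R b"
    using qw unfolding ogc_def b_def by auto
  define c where "c = cos t"
  define s where "s = sin t"
  define m where "m = - (1 + \<kappa> * \<kappa>) / n"
  define A where "A = c * \<kappa> + s * m"
  define Bc where "Bc = c * n - s * \<kappa>"
  have Kq: "K q = A *\<^sub>R p + Bc *\<^sub>R b"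
  proof -
    have "K q = c *\<^sub>R K p + s *\<^sub>R K b" unfolding t(1) c_def s_def using linK by (simp add: linear_add linear_scale)
    also have "\<dots> = c *\<^sub>R (\<kappa> *\<^sub>R p + n *\<^sub>R b) + s *\<^sub>R (m *\<^sub>R p + (- \<kappa>) *\<^sub>R b)" unfolding Kp Kb m_def ..
    also have "\<dots> = A *\<^sub>R p + Bc *\<^sub>R b" unfolding A_def Bc_def by (simp add: algebra_simps)
    finally show ?thesis .
  qed
  have nq: "norm q = 1" unfolding t(1) using norm_comb[OF on, of "cos t" "sin t"] by simp
  have q0: "q \<noteq> 0" using nq by auto
  have D: "c * Bc - s * A > 0"
  proof -
    have "n * (c * Bc - s * A) = (c * n - s * \<kappa>)\<^sup>2 + s\<^sup>2"
      unfolding A_def Bc_def m_def using n by (simp add: field_simps power2_eq_square)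
    moreover have "(c * n - s * \<kappa>)\<^sup>2 + s\<^sup>2 > 0"
    proof (cases "s = 0")
      case True
      then have "c \<noteq> 0" unfolding c_def s_def using sin_cos_squared_add[of t] by auto
      then show ?thesis using True n by simp
    next
      case False
      then show ?thesis by (simp add: add_nonneg_pos)
    qed
    ultimately show ?thesis using n by (metis zero_less_mult_pos)
  qed
  have "(sgn q, sgn (K q - (inner (K q) q / inner q q) *\<^sub>R q)) \<in> ogc p b"
    by (rule ogcG[OF on t(1)[folded c_def s_def] q0 Kq D])
  moreover have "sgn q = q" using nq by (simp add: sgn_div_norm)
  moreover have "inner q q = 1" using nq by (simp add: dot_square_norm)
  ultimately have "(q, vf K q) \<in> ogc p b" unfolding vf_def by simp
  then show ?thesis using ogc_tangent_unique[OF on] qw unfolding b_def by blast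
qed

lemma circle_through:
  assumes p: "norm p = 1" and q: "q \<in> fst ` ogc p (vf K p)"
  shows "ogc p (vf K p) = ogc q (vf K q)"
proof -
  obtain w where qw: "(q, w) \<in> ogc p (vf K p)" using q by force
  have "w = vf K q" by (rule vf_consistent[OF p qw])
  then show ?thesis using ogc_rotate[OF qw] by simp
qed

lemma span_point:
  assumes X: "X \<noteq> 0" and Y: "\<gamma> *\<^sub>R X + \<delta> *\<^sub>R K X \<noteq> 0"
  shows "sgn (\<gamma> *\<^sub>R X + \<delta> *\<^sub>R K X) \<in> fst ` ogc (sgn X) (vf K (sgn X))"
proof -
  define \<kappa> where "\<kappa> = inner (K X) X / inner X X"
  define W where "W = K X - \<kappa> *\<^sub>R X"
  have W0: "W \<noteq> 0" unfolding W_def by (rule K_not_par[OF X])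
  have vfs: "vf K (sgn X) = sgn W" unfolding W_def \<kappa>_def by (rule vf_scale[OF X])
  have nsX: "norm (sgn X) = 1" using X by (simp add: norm_sgn)
  have on: "norm (sgn X) = 1" "norm (sgn W) = 1" "inner (sgn X) (sgn W) = 0"
    using vf_on[OF nsX] nsX unfolding vfs by auto
  have XW: "X = norm X *\<^sub>R sgn X" "W = norm W *\<^sub>R sgn W" using X W0 by (simp_all add: sgn_div_norm)
  have "\<gamma> *\<^sub>R X + \<delta> *\<^sub>R K X = (\<gamma> + \<delta> * \<kappa>) *\<^sub>R X + \<delta> *\<^sub>R W"
    unfolding W_def by (simp add: algebra_simps)
  also have "\<dots> = ((\<gamma> + \<delta> * \<kappa>) * norm X) *\<^sub>R sgn X + (\<delta> * norm W) *\<^sub>R sgn W"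
    by (subst XW(1), subst XW(2)) simp
  finally have eq: "\<gamma> *\<^sub>R X + \<delta> *\<^sub>R K X = ((\<gamma> + \<delta> * \<kappa>) * norm X) *\<^sub>R sgn X + (\<delta> * norm W) *\<^sub>R sgn W" .
  show ?thesis unfolding vfs eq by (rule ogc_point_mem[OF on]) (use Y eq in simp)
qed

lemma vf_cont: "continuous_on (sphere 0 1) (vf K)"
proof -
  have cK: "continuous_on UNIV K" using linK by (simp add: linear_continuous_on linear_conv_bounded_linear)
  have "continuous_on (sphere 0 1) (\<lambda>p. K p - inner (K p) p *\<^sub>R p)"
    by (intro continuous_intros continuous_on_subset[OF cK]) auto
  moreover have "K p - inner (K p) p *\<^sub>R p \<noteq> 0" if "p \<in> sphere 0 1" for p
  proof -
    have "p \<noteq> 0" using that by auto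
    then show ?thesis using K_not_par by blast
  qed
  ultimately show ?thesis unfolding vf_def by (intro continuous_on_sgn) auto
qed

end



lemma ogc_norm:
  fixes a b :: "'v::real_inner"
  assumes on: "norm a = 1" "norm b = 1" "inner a b = 0" and q: "q \<in> fst ` ogc a b"
  shows "norm q = 1"
proof -
  obtain t where "q = cos t *\<^sub>R a + sin t *\<^sub>R b" using q unfolding ogc_def by auto
  then show ?thesis using norm_comb[OF on, of "cos t" "sin t"] by simp
qed

lemma ogc_base: "(a, b) \<in> ogc a b"
  using ogc_mem[of 0 a b] by simp

context cstruct
begin

lemma vf_line:
  assumes U: "U \<noteq> 0" and KU: "K U = d *\<^sub>R Q - c *\<^sub>R U" and d: "d > 0"
  shows "vf K (sgn U) = sgn (Q - (inner Q U / inner U U) *\<^sub>R U)"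
proof -
  have UU: "inner U U \<noteq> 0" using U by simp
  have "K U - (inner (K U) U / inner U U) *\<^sub>R U = d *\<^sub>R (Q - (inner Q U / inner U U) *\<^sub>R U)"
    unfolding KU using UU by (simp add: inner_diff_left algebra_simps diff_divide_distrib)
  then show ?thesis using vf_scale[OF U] d by (simp add: sgn_scaleR)
qed

definition "FF = (\<lambda>p. ogc p (vf K p)) ` sphere 0 1"

lemma FF_fib: "great_circle_fibration FF"
  unfolding great_circle_fibration_def
proof (intro conjI ballI)
  fix C assume "C \<in> FF"
  then obtain p where p: "norm p = 1" and C: "C = ogc p (vf K p)" unfolding FF_def by auto
  show "oriented_great_circle C" unfolding oriented_great_circle_def C using vf_on[OF p] p by blast
next
  fix q :: 'v assume q: "q \<in> sphere 0 1"
  then have nq: "norm q = 1" by simp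
  show "\<exists>!C. C \<in> FF \<and> q \<in> fst ` C"
  proof (rule ex1I[of _ "ogc q (vf K q)"])
    show "ogc q (vf K q) \<in> FF \<and> q \<in> fst ` ogc q (vf K q)"
      unfolding FF_def using q ogc_base[of q "vf K q"] by force
  next
    fix C assume "C \<in> FF \<and> q \<in> fst ` C"
    then have qC: "q \<in> fst ` C" and "C \<in> FF" by auto
    then obtain p where p: "norm p = 1" and C: "C = ogc p (vf K p)" unfolding FF_def by auto
    show "C = ogc q (vf K q)" unfolding C by (rule circle_through[OF p qC[unfolded C]])
  qed
next
  show "\<exists>v. continuous_on (sphere 0 1) v \<and> (\<forall>C\<in>FF. \<forall>(p, w)\<in>C. v p = w)"
  proof (intro exI conjI ballI)
    show "continuous_on (sphere 0 1) (vf K)" by (rule vf_cont)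
    fix C and pw :: "'v \<times> 'v" assume C: "C \<in> FF" and pw: "pw \<in> C"
    obtain p where p: "norm p = 1" and C: "C = ogc p (vf K p)" using C unfolding FF_def by auto
    show "case pw of (q, w) \<Rightarrow> vf K q = w" using vf_consistent[OF p] pw C by (cases pw) auto
  qed
qed

end


lemma disc_pos:
  fixes B :: "'a::euclidean_space \<Rightarrow> 'a"
  assumes lin: "linear B" and ne: "no_real_eigenvalue B" and rel: "\<And>u. B (B u) = x *\<^sub>R u + y *\<^sub>R B u"
  shows "- x - y\<^sup>2 / 4 > 0"
proof (rule ccontr)
  assume "\<not> ?thesis"
  then have D: "y\<^sup>2 + 4 * x \<ge> 0" by simp
  define r1 where "r1 = (y + sqrt (y\<^sup>2 + 4 * x)) / 2"
  define r2 where "r2 = (y - sqrt (y\<^sup>2 + 4 * x)) / 2"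
  have s: "r1 + r2 = y" unfolding r1_def r2_def by (simp add: field_simps)
  have p: "r1 * r2 = - x" unfolding r1_def r2_def using D
    by (simp add: field_simps power2_eq_square)
  obtain u0 :: 'a where u0: "u0 \<noteq> 0" using nonzero_Basis SOME_Basis by blast
  define w where "w = B u0 - r2 *\<^sub>R u0"
  have "B w = r1 *\<^sub>R w"
  proof -
    have "B w = x *\<^sub>R u0 + y *\<^sub>R B u0 - r2 *\<^sub>R B u0" unfolding w_def using lin rel by (simp add: linear_diff linear_scale)
    also have "\<dots> = r1 *\<^sub>R w" 
    proof -
      have x: "x = - (r1 * r2)" using p by simp
      show ?thesis unfolding w_def s[symmetric] x by (simp add: algebra_simps)
    qed
    finally show ?thesis .
  qed
  then show False using ne u0 unfolding no_real_eigenvalue_def w_def by (metis eq_iff_diff_eq_0)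
qed


definition Kc :: "('a::euclidean_space \<Rightarrow> 'a) \<Rightarrow> real \<Rightarrow> real \<Rightarrow> ('a \<times> real \<times> real) \<Rightarrow> ('a \<times> real \<times> real)" where
  "Kc B a0 b0 p = ((1/b0) *\<^sub>R (B (fst p) - a0 *\<^sub>R fst p),
      (a0/b0) * fst (snd p) + (1/b0) * snd (snd p),
      (- (a0\<^sup>2 + b0\<^sup>2) / b0) * fst (snd p) + (- a0 / b0) * snd (snd p))"

lemma Kc_cstruct:
  fixes B :: "'a::euclidean_space \<Rightarrow> 'a"
  assumes lin: "linear B" and rel: "\<And>u. B (B u) = x *\<^sub>R u + y *\<^sub>R B u"
    and a0: "a0 = y / 2" and b0: "b0 > 0" "b0\<^sup>2 = - x - y\<^sup>2 / 4"
  shows "cstruct (Kc B a0 b0)"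
proof -
  have L: "linear (Kc B a0 b0)"
  proof -
    have A: "Kc B a0 b0 (p + q) = Kc B a0 b0 p + Kc B a0 b0 q" for p q
      using b0(1) by (simp add: Kc_def lin linear_add algebra_simps) (simp add: field_simps)
    have S: "Kc B a0 b0 (r *\<^sub>R p) = r *\<^sub>R Kc B a0 b0 p" for r p
      using b0(1) by (simp add: Kc_def lin linear_add linear_scale linear_diff algebra_simps)
    show ?thesis by (rule linearI[OF A S])
  qed
  have KK: "Kc B a0 b0 (Kc B a0 b0 p) = - p" for p
  proof -
  obtain z s h where p: "p = (z, s, h)" by (cases p) auto
  have b0n: "b0 \<noteq> 0" using b0 by simp
  have x: "x = - b0\<^sup>2 - a0\<^sup>2" using b0(2) unfolding a0 by (simp add: power2_eq_square field_simps)
  have y: "y = 2 * a0" using a0 by simp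
  have 1: "(1/b0) *\<^sub>R (B ((1/b0) *\<^sub>R (B z - a0 *\<^sub>R z)) - a0 *\<^sub>R ((1/b0) *\<^sub>R (B z - a0 *\<^sub>R z))) = - z"
  proof -
    have "B ((1/b0) *\<^sub>R (B z - a0 *\<^sub>R z)) = (1/b0) *\<^sub>R (B (B z) - a0 *\<^sub>R B z)"
      using lin by (simp add: linear_scale linear_diff)
    also have "\<dots> = (1/b0) *\<^sub>R (x *\<^sub>R z + (2 * a0) *\<^sub>R B z - a0 *\<^sub>R B z)" unfolding rel y ..
    finally have e: "B ((1/b0) *\<^sub>R (B z - a0 *\<^sub>R z)) = (1/b0) *\<^sub>R (x *\<^sub>R z + (2 * a0) *\<^sub>R B z - a0 *\<^sub>R B z)" .
    have "(1/b0) *\<^sub>R (B ((1/b0) *\<^sub>R (B z - a0 *\<^sub>R z)) - a0 *\<^sub>R ((1/b0) *\<^sub>R (B z - a0 *\<^sub>R z)))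
        = ((1/b0) * (1/b0) * x + (1/b0) * (1/b0) * a0 * a0) *\<^sub>R z"
      unfolding e by (simp add: algebra_simps) (simp only: scaleR_left_distrib[symmetric], simp add: field_simps)
    also have "(1/b0) * (1/b0) * x + (1/b0) * (1/b0) * a0 * a0 = -1" unfolding x using b0n by (simp add: power2_eq_square field_simps)
    finally show ?thesis by simp
  qed
  show "Kc B a0 b0 (Kc B a0 b0 p) = - p"
    unfolding p Kc_def using b0n 1 by (simp add: field_simps power2_eq_square)
  qed
  show ?thesis by (rule cstruct.intro[OF L KK])
qed


lemma backward_core:
  fixes B :: "'a::euclidean_space \<Rightarrow> 'a"
  assumes lin: "linear B" and ne: "no_real_eigenvalue B" and rel: "\<And>u. B (B u) = x *\<^sub>R u + y *\<^sub>R B u"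
  shows "corresponds_to_great_circle_fibration B"
proof -
  define a0 where "a0 = y / 2"
  define b0 where "b0 = sqrt (- x - y\<^sup>2 / 4)"
  have dp: "- x - y\<^sup>2 / 4 > 0" by (rule disc_pos[OF lin ne rel])
  have b0pos: "b0 > 0" unfolding b0_def using dp by simp
  have b0sq: "b0\<^sup>2 = - x - y\<^sup>2 / 4" unfolding b0_def using dp by simp
  interpret cstruct "Kc B a0 b0" by (rule Kc_cstruct[OF lin rel a0_def b0pos b0sq])
  define K where "K = Kc B a0 b0"
  have KU: "K (w, 0, 1) = (1/b0) *\<^sub>R (B w, 1, 0) - (a0/b0) *\<^sub>R (w, 0, 1)" for w
    unfolding K_def Kc_def by (simp add: algebra_simps)
  have U0: "(w, 0::real, 1::real) \<noteq> 0" for w :: 'a by (simp add: zero_prod_def)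
  have LC: "line_great_circle B w = ogc (sgn (w, 0, 1)) (vf K (sgn (w, 0, 1)))" for w
    unfolding line_great_circle_def ogc_of_plane_def K_def
    using vf_line[OF U0 KU[unfolded K_def]] b0pos by simp
  have FFK: "FF = (\<lambda>p. ogc p (vf K p)) ` sphere 0 1" unfolding FF_def K_def ..
  show ?thesis unfolding corresponds_to_great_circle_fibration_def
  proof (intro exI conjI)
    show "great_circle_fibration FF" by (rule FF_fib)
    show "{C \<in> FF. \<exists>pw\<in>C. 0 < snd (snd (fst pw))} = range (line_great_circle B)"
    proof (intro equalityI subsetI)
      fix C assume "C \<in> range (line_great_circle B)"
      then obtain w where C: "C = line_great_circle B w" by auto
      define U where "U = (w, 0::real, 1::real)"
      have nU: "norm (sgn U) = 1" unfolding U_def using U0 by (simp add: norm_sgn)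
      have CU: "C = ogc (sgn U) (vf K (sgn U))" unfolding C LC U_def ..
      have "C \<in> FF" unfolding FFK CU using nU by simp
      moreover have "(sgn U, vf K (sgn U)) \<in> C" unfolding CU by (rule ogc_base)
      moreover have "0 < snd (snd (sgn U))" unfolding U_def using U0 by (simp add: sgn_div_norm)
      ultimately show "C \<in> {C \<in> FF. \<exists>pw\<in>C. 0 < snd (snd (fst pw))}" by force
    next
      fix C assume "C \<in> {C \<in> FF. \<exists>pw\<in>C. 0 < snd (snd (fst pw))}"
      then obtain pw where CF: "C \<in> FF" and pw: "pw \<in> C" and hpos: "0 < snd (snd (fst pw))" by auto
      obtain p where p: "norm p = 1" and Cp: "C = ogc p (vf K p)" using CF unfolding FFK by auto
      define q where "q = fst pw"
      have qC: "q \<in> fst ` C" unfolding q_def using pw by auto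
      have nq: "norm q = 1" using ogc_norm[of p "vf K p" q] vf_on[OF p[unfolded K_def]] p qC Cp unfolding K_def by auto
      have Cq: "C = ogc q (vf K q)" unfolding Cp K_def by (rule circle_through[OF p qC[unfolded Cp K_def]])
      obtain z \<tau> h where qz: "q = (z, \<tau>, h)" by (cases q) auto
      have h: "h > 0" using hpos unfolding q_def qz[unfolded q_def] by simp
      define c0 where "c0 = a0 / b0"
      define d0 where "d0 = 1 / b0"
      define e0 where "e0 = - (a0\<^sup>2 + b0\<^sup>2) / b0"
      define f0 where "f0 = - a0 / b0"
      have Kq: "K q = ((1/b0) *\<^sub>R (B z - a0 *\<^sub>R z), c0 * \<tau> + d0 * h, e0 * \<tau> + f0 * h)"
        unfolding qz K_def Kc_def c0_def d0_def e0_def f0_def by simp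
      define det where "det = \<tau> * (e0 * \<tau> + f0 * h) - h * (c0 * \<tau> + d0 * h)"
      have "- (b0 * det) = (a0 * \<tau> + h)\<^sup>2 + b0\<^sup>2 * \<tau>\<^sup>2"
        unfolding det_def c0_def d0_def e0_def f0_def using b0pos by (simp add: field_simps power2_eq_square)
      moreover have "(a0 * \<tau> + h)\<^sup>2 + b0\<^sup>2 * \<tau>\<^sup>2 > 0"
      proof (cases "\<tau> = 0")
        case True then show ?thesis using h by simp
      next
        case False then show ?thesis using b0pos by (simp add: add_nonneg_pos)
      qed
      ultimately have det0: "det \<noteq> 0" by auto
      define \<alpha> where "\<alpha> = - (c0 * \<tau> + d0 * h) / det"
      define \<beta> where "\<beta> = \<tau> / det"
      define U where "U = \<alpha> *\<^sub>R q + \<beta> *\<^sub>R K q"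
      have U2: "fst (snd U) = 0" unfolding U_def Kq \<alpha>_def \<beta>_def using det0 by (simp add: qz field_simps)
      have num: "- (c0 * \<tau> + d0 * h) * h + \<tau> * (e0 * \<tau> + f0 * h) = det" unfolding det_def by (simp add: algebra_simps)
      have "snd (snd U) = \<alpha> * h + \<beta> * (e0 * \<tau> + f0 * h)" unfolding U_def Kq by (simp add: qz)
      also have "\<dots> = (- (c0 * \<tau> + d0 * h) * h + \<tau> * (e0 * \<tau> + f0 * h)) / det"
        unfolding \<alpha>_def \<beta>_def by (simp add: add_divide_distrib)
      also have "\<dots> = 1" unfolding num using det0 by simp
      finally have U3: "snd (snd U) = 1" .
      have Uw: "U = (fst U, 0, 1)" using U2 U3 by (simp add: prod_eq_iff)
      have Un: "U \<noteq> 0" using U3 by auto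
      have ab: "\<alpha>\<^sup>2 + \<beta>\<^sup>2 \<noteq> 0"
      proof
        assume "\<alpha>\<^sup>2 + \<beta>\<^sup>2 = 0"
        then have "\<alpha> = 0" "\<beta> = 0" by (simp_all add: sum_power2_eq_zero_iff)
        then show False using Un unfolding U_def by simp
      qed
      have KU': "K U = \<alpha> *\<^sub>R K q - \<beta> *\<^sub>R q"
        unfolding U_def K_def using linK KK by (simp add: linear_add linear_scale)
      define S where "S = \<alpha>\<^sup>2 + \<beta>\<^sup>2"
      have S0: "S \<noteq> 0" unfolding S_def by (rule ab)
      have Sab: "\<alpha> * \<alpha> + \<beta> * \<beta> = S" unfolding S_def by (simp add: power2_eq_square)
      define \<gamma> where "\<gamma> = \<alpha> / S"
      define \<delta> where "\<delta> = - \<beta> / S"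
      have "\<gamma> *\<^sub>R U + \<delta> *\<^sub>R K U = (\<gamma> * \<alpha> - \<delta> * \<beta>) *\<^sub>R q + (\<gamma> * \<beta> + \<delta> * \<alpha>) *\<^sub>R K q"
        unfolding KU' by (simp add: U_def algebra_simps)
      also have "\<gamma> * \<alpha> - \<delta> * \<beta> = 1"
      proof -
        have "\<gamma> * \<alpha> - \<delta> * \<beta> = (\<alpha> * \<alpha> + \<beta> * \<beta>) / S"
          unfolding \<gamma>_def \<delta>_def by (simp add: add_divide_distrib)
        then show ?thesis using S0 unfolding Sab by simp
      qed
      also have "\<gamma> * \<beta> + \<delta> * \<alpha> = 0" unfolding \<gamma>_def \<delta>_def by (simp add: add_divide_distrib[symmetric])
      finally have qU: "\<gamma> *\<^sub>R U + \<delta> *\<^sub>R K U = q" by simp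
      have sq: "sgn q = q" using nq by (simp add: sgn_div_norm)
      have "\<gamma> *\<^sub>R U + \<delta> *\<^sub>R K U \<noteq> 0" using qU nq by auto
      then have "sgn (\<gamma> *\<^sub>R U + \<delta> *\<^sub>R K U) \<in> fst ` ogc (sgn U) (vf K (sgn U))"
        using span_point[OF Un, of \<gamma> \<delta>] unfolding K_def by blast
      then have "q \<in> fst ` ogc (sgn U) (vf K (sgn U))" unfolding qU sq .
      moreover have "norm (sgn U) = 1" using Un by (simp add: norm_sgn)
      ultimately have "ogc (sgn U) (vf K (sgn U)) = ogc q (vf K q)"
        unfolding K_def by (rule circle_through[rotated])
      then have "C = line_great_circle B (fst U)" unfolding Cq LC using Uw by metis
      then show "C \<in> range (line_great_circle B)" by blast
    qed
  qed
qed




lemma fwd_LG: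
  fixes B :: "'a::euclidean_space \<Rightarrow> 'a" and vv :: "'a \<times> real \<times> real \<Rightarrow> 'a \<times> real \<times> real"
  assumes inF: "line_great_circle B y \<in> F"
    and vvF: "\<forall>C\<in>F. \<forall>(p, w)\<in>C. vv p = w"
    and s: "s > 0" and r: "r > 0"
    and Qd: "Q = (B y, 1::real, 0::real)" and Xd: "X = s *\<^sub>R ((y, 0::real, 1::real) + t *\<^sub>R Q)"
  shows "vv (sgn X) = sgn (r *\<^sub>R Q - (inner (r *\<^sub>R Q) X / inner X X) *\<^sub>R X)"
proof -
  define U :: "'a \<times> real \<times> real" where "U = (y, 0, 1)"
  define \<kappa> where "\<kappa> = inner Q U / inner U U"
  define W where "W = Q - \<kappa> *\<^sub>R U"
  have X_def: "X = s *\<^sub>R (U + t *\<^sub>R Q)" unfolding Xd U_def ..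
  note Q_def = Qd
  have U0: "U \<noteq> 0" unfolding U_def by (simp add: zero_prod_def)
  have W0: "W \<noteq> 0" unfolding W_def U_def Q_def by (simp add: zero_prod_def)
  have UU: "inner U U \<noteq> 0" using U0 by simp
  have WU: "inner U W = 0" unfolding W_def \<kappa>_def using UU by (simp add: inner_diff_right inner_commute)
  define a where "a = sgn U"
  define b where "b = sgn W"
  have on: "norm a = 1" "norm b = 1" "inner a b = 0"
    unfolding a_def b_def using U0 W0 WU by (auto simp: norm_sgn sgn_div_norm)
  have Ua: "U = norm U *\<^sub>R a" "W = norm W *\<^sub>R b" unfolding a_def b_def using U0 W0 by (simp_all add: sgn_div_norm)
  have Qab: "Q = (\<kappa> * norm U) *\<^sub>R a + norm W *\<^sub>R b"
  proof -
    have "Q = \<kappa> *\<^sub>R U + W" unfolding W_def by simp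
    also have "\<dots> = (\<kappa> * norm U) *\<^sub>R a + norm W *\<^sub>R b" by (subst Ua(1), subst Ua(2)) simp
    finally show ?thesis .
  qed
  have Xab: "X = (s * (1 + t * \<kappa>) * norm U) *\<^sub>R a + (s * t * norm W) *\<^sub>R b"
  proof -
    have "X = s *\<^sub>R (U + t *\<^sub>R ((\<kappa> * norm U) *\<^sub>R a + norm W *\<^sub>R b))" unfolding X_def using Qab by simp
    also have "\<dots> = s *\<^sub>R (norm U *\<^sub>R a + t *\<^sub>R ((\<kappa> * norm U) *\<^sub>R a + norm W *\<^sub>R b))" using Ua(1) by simp
    also have "\<dots> = (s * (1 + t * \<kappa>) * norm U) *\<^sub>R a + (s * t * norm W) *\<^sub>R b" by (simp add: algebra_simps)
    finally show ?thesis .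
  qed
  have rQ: "r *\<^sub>R Q = (r * \<kappa> * norm U) *\<^sub>R a + (r * norm W) *\<^sub>R b" unfolding Qab by (simp add: algebra_simps)
  have X0: "X \<noteq> 0" unfolding X_def U_def Q_def using s by (simp add: zero_prod_def)
  have D: "(s * (1 + t * \<kappa>) * norm U) * (r * norm W) - (s * t * norm W) * (r * \<kappa> * norm U) > 0"
  proof -
    have "(s * (1 + t * \<kappa>) * norm U) * (r * norm W) - (s * t * norm W) * (r * \<kappa> * norm U) = s * r * norm U * norm W"
      by (simp add: algebra_simps)
    then show ?thesis using s r U0 W0 by simp
  qed
  have mem: "(sgn X, sgn (r *\<^sub>R Q - (inner (r *\<^sub>R Q) X / inner X X) *\<^sub>R X)) \<in> ogc a b"
    by (rule ogcG[OF on Xab X0 rQ D])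
  have "line_great_circle B y = ogc a b"
    unfolding line_great_circle_def ogc_of_plane_def a_def b_def W_def \<kappa>_def U_def Q_def ..
  then have "ogc a b \<in> F" using inF by simp
  then have "vv (sgn X) = sgn (r *\<^sub>R Q - (inner (r *\<^sub>R Q) X / inner X X) *\<^sub>R X)" using vvF mem by fastforce
  then show ?thesis .
qed


lemma fwd_LIM:
  fixes B :: "'a::euclidean_space \<Rightarrow> 'a" and vv :: "'a \<times> real \<times> real \<Rightarrow> 'a \<times> real \<times> real"
  assumes lin: "linear B"
    and inF: "\<And>y. line_great_circle B y \<in> F"
    and vvF: "\<forall>C\<in>F. \<forall>(p, w)\<in>C. vv p = w"
    and cont: "continuous_on (sphere 0 1) vv"
    and u: "u = v + t *\<^sub>R B v" and u0: "u \<noteq> 0" and nk: "\<And>k. B v - k *\<^sub>R u \<noteq> 0"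
  shows "vv (sgn (u, 0::real, 0::real)) = sgn (B v - (inner (B v) u / inner u u) *\<^sub>R u, 0::real, 0::real)"
proof -
  define Xh where "Xh h = (u, h * t, h)" for h :: real
  define Qh where "Qh h = (B v, h, 0::real)" for h :: real
  have eq: "vv (sgn (Xh h)) = sgn (Qh h - (inner (Qh h) (Xh h) / inner (Xh h) (Xh h)) *\<^sub>R Xh h)" if h: "h > 0" for h
  proof -
    define y where "y = (1/h) *\<^sub>R v"
    have By: "B y = (1/h) *\<^sub>R B v" unfolding y_def using lin by (simp add: linear_scale)
    have 1: "h *\<^sub>R (B y, 1::real, 0::real) = Qh h" unfolding Qh_def By using h by simp
    have 2: "h *\<^sub>R ((y, 0::real, 1::real) + t *\<^sub>R (B y, 1::real, 0::real)) = Xh h"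
      unfolding Xh_def By u using h by (simp add: y_def algebra_simps)
    show ?thesis using fwd_LG[OF inF[of y] vvF h h refl refl, where t=t] unfolding 1 2 .
  qed
  have u00: "(u, 0::real, 0::real) \<noteq> 0" using u0 by (simp add: zero_prod_def)
  have id0: "((\<lambda>h::real. h) \<longlongrightarrow> 0) (at_right 0)" by (rule tendsto_ident_at)
  have ht0: "((\<lambda>h::real. h * t) \<longlongrightarrow> 0) (at_right 0)" by (rule tendsto_mult_left_zero[OF id0])
  have lim_X: "(Xh \<longlongrightarrow> (u, 0, 0)) (at_right 0)"
    unfolding Xh_def by (intro tendsto_Pair tendsto_const ht0 id0)
  have Xh0: "Xh h \<noteq> 0" for h using u0 unfolding Xh_def by (simp add: zero_prod_def)
  have L1: "((\<lambda>h. vv (sgn (Xh h))) \<longlongrightarrow> vv (sgn (u, 0, 0))) (at_right 0)"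
  proof (rule continuous_on_tendsto_compose[OF cont])
    show "((\<lambda>h. sgn (Xh h)) \<longlongrightarrow> sgn (u, 0, 0)) (at_right 0)" by (rule tendsto_sgn[OF lim_X u00])
    show "sgn (u, 0::real, 0::real) \<in> sphere 0 1" using u00 u0 by (simp add: norm_sgn)
    show "\<forall>\<^sub>F h in at_right 0. sgn (Xh h) \<in> sphere 0 1" using Xh0 by (simp add: norm_sgn)
  qed
  have lim_Q: "(Qh \<longlongrightarrow> (B v, 0, 0)) (at_right 0)"
    unfolding Qh_def by (intro tendsto_Pair tendsto_const id0)
  have uu: "inner (u, 0::real, 0::real) (u, 0, 0) \<noteq> 0" using u0 by simp
  have nz: "(B v, 0::real, 0::real) - (inner (B v, 0::real, 0::real) (u, 0, 0) / inner (u, 0::real, 0::real) (u, 0, 0)) *\<^sub>R (u, 0, 0) \<noteq> 0"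
    using nk[of "inner (B v) u / inner u u"] by (simp add: zero_prod_def)
  have L2: "((\<lambda>h. sgn (Qh h - (inner (Qh h) (Xh h) / inner (Xh h) (Xh h)) *\<^sub>R Xh h)) \<longlongrightarrow>
      sgn ((B v, 0::real, 0::real) - (inner (B v, 0::real, 0::real) (u, 0, 0) / inner (u, 0::real, 0::real) (u, 0, 0)) *\<^sub>R (u, 0, 0))) (at_right 0)"
    by (intro tendsto_sgn tendsto_diff tendsto_scaleR tendsto_divide tendsto_inner lim_X lim_Q uu nz)
  have ev: "\<forall>\<^sub>F h in at_right 0. sgn (Qh h - (inner (Qh h) (Xh h) / inner (Xh h) (Xh h)) *\<^sub>R Xh h) = vv (sgn (Xh h))"
    using eventually_at_right_less[of "0::real"] by (rule eventually_mono) (rule eq[symmetric])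
  have L2': "((\<lambda>h. vv (sgn (Xh h))) \<longlongrightarrow>
      sgn ((B v, 0::real, 0::real) - (inner (B v, 0::real, 0::real) (u, 0, 0) / inner (u, 0::real, 0::real) (u, 0, 0)) *\<^sub>R (u, 0, 0))) (at_right 0)"
    by (rule Lim_transform_eventually[OF L2 ev])
  have "vv (sgn (u, 0, 0)) = sgn ((B v, 0::real, 0::real) - (inner (B v, 0::real, 0::real) (u, 0, 0) / inner (u, 0::real, 0::real) (u, 0, 0)) *\<^sub>R (u, 0, 0))"
    by (rule tendsto_unique[OF trivial_limit_at_right_real L1 L2'])
  then show ?thesis by (simp add: zero_prod_def)
qed

lemma surj_IB:
  fixes B :: "'a::euclidean_space \<Rightarrow> 'a"
  assumes lin: "linear B" and ne: "no_real_eigenvalue B"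
  shows "\<exists>v. v + B v = u"
proof -
  have A: "(x + y) + B (x + y) = (x + B x) + (y + B y)" for x y by (simp add: linear_add[OF lin] algebra_simps)
  have S: "(r *\<^sub>R x) + B (r *\<^sub>R x) = r *\<^sub>R (x + B x)" for r x by (simp add: linear_scale[OF lin] scaleR_add_right)
  have l: "linear (\<lambda>v. v + B v)" by (rule linearI[OF A S])
  have i: "inj (\<lambda>v. v + B v)"
    unfolding linear_injective_0[OF l]
  proof (intro allI impI)
    fix v assume v: "v + B v = 0"
    have "B v = (v + B v) - v" by simp
    also have "\<dots> = (-1) *\<^sub>R v" using v by simp
    finally show "v = 0" using ne unfolding no_real_eigenvalue_def by blast
  qed
  have "surj (\<lambda>v. v + B v)" by (rule linear_inj_imp_surj[OF l i])
  then show ?thesis by (metis surjD)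
qed



lemma span2': "(x::'a::real_vector) = a *\<^sub>R u + b *\<^sub>R w \<Longrightarrow> x \<in> span {u, w}"
proof -
  assume x: "x = a *\<^sub>R u + b *\<^sub>R w"
  have "a *\<^sub>R u + b *\<^sub>R w \<in> span {u, w}" by (intro span_add span_scale span_base) auto
  then show ?thesis using x by simp
qed

lemma sgn_P00: "sgn (P::'a::real_normed_vector, 0::real, 0::real) = (sgn P, 0, 0)"
  by (simp add: sgn_div_norm norm_Pair)

lemma forward:
  fixes B :: "'a::euclidean_space \<Rightarrow> 'a"
  assumes lin: "linear B" and ne: "no_real_eigenvalue B" and corr: "corresponds_to_great_circle_fibration B"
  shows "invariant_on_planes B"
proof -
  obtain F where fib: "great_circle_fibration F"
    and S: "{C \<in> F. \<exists>pw\<in>C. 0 < snd (snd (fst pw))} = range (line_great_circle B)"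
    using corr unfolding corresponds_to_great_circle_fibration_def by blast
  obtain vv where cont: "continuous_on (sphere 0 1) vv" and vvF: "\<forall>C\<in>F. \<forall>(p, w)\<in>C. vv p = w"
    using fib unfolding great_circle_fibration_def by blast
  have inF: "line_great_circle B y \<in> F" for y using S by blast
  show ?thesis unfolding invariant_on_planes_def
  proof (intro allI impI)
    fix u :: 'a assume u0: "u \<noteq> 0"
    obtain v where v: "v + B v = u" using surj_IB[OF lin ne] by blast
    have v0: "v \<noteq> 0" using v u0 lin by (auto simp: linear_0)
    have nk1: "B u - k *\<^sub>R u \<noteq> 0" for k using ne u0 unfolding no_real_eigenvalue_def by auto
    have nk2: "B v - k *\<^sub>R u \<noteq> 0" for k
    proof
      assume e: "B v - k *\<^sub>R u = 0"
      then have e2: "(1 - k) *\<^sub>R B v = k *\<^sub>R v" unfolding v[symmetric] by (simp add: algebra_simps)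
      show False
      proof (cases "k = 1")
        case True then show False using e2 v0 by simp
      next
        case False
        then have "B v = (k / (1 - k)) *\<^sub>R v"
          using arg_cong[OF e2, of "\<lambda>x. (1 / (1 - k)) *\<^sub>R x"] by simp
        then show False using ne v0 unfolding no_real_eigenvalue_def by blast
      qed
    qed
    define k1 where "k1 = inner (B u) u / inner u u"
    define k2 where "k2 = inner (B v) u / inner u u"
    define P1 where "P1 = B u - k1 *\<^sub>R u"
    define P2 where "P2 = B v - k2 *\<^sub>R u"
    have L1: "vv (sgn (u, 0::real, 0::real)) = sgn (P1, 0::real, 0::real)"
      unfolding P1_def k1_def by (rule fwd_LIM[OF lin inF vvF cont _ u0 nk1, where t=0]) simp
    have L2: "vv (sgn (u, 0::real, 0::real)) = sgn (P2, 0::real, 0::real)"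
      unfolding P2_def k2_def by (rule fwd_LIM[OF lin inF vvF cont _ u0 nk2, where t=1]) (simp add: v)
    have P10: "P1 \<noteq> 0" unfolding P1_def by (rule nk1)
    have P20: "P2 \<noteq> 0" unfolding P2_def by (rule nk2)
    have sg: "sgn P1 = sgn P2" using L1 L2 unfolding sgn_P00 by simp
    define lm where "lm = norm P2 / norm P1"
    have lpos: "lm > 0" unfolding lm_def using P10 P20 by simp
    have "P2 = norm P2 *\<^sub>R sgn P2" using P20 by (simp add: sgn_div_norm)
    also have "\<dots> = norm P2 *\<^sub>R sgn P1" using sg by simp
    also have "\<dots> = lm *\<^sub>R P1" unfolding lm_def using P10 by (simp add: sgn_div_norm divide_inverse)
    finally have P21: "P2 = lm *\<^sub>R P1" .
    define \<mu> where "\<mu> = k2 - lm * k1"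
    have w: "B v = lm *\<^sub>R B u + \<mu> *\<^sub>R u"
    proof -
      have "B v = P2 + k2 *\<^sub>R u" unfolding P2_def by simp
      also have "\<dots> = lm *\<^sub>R (B u - k1 *\<^sub>R u) + k2 *\<^sub>R u" unfolding P21 P1_def ..
      also have "\<dots> = lm *\<^sub>R B u + \<mu> *\<^sub>R u" unfolding \<mu>_def by (simp add: algebra_simps)
      finally show ?thesis .
    qed
    have Bw: "B (B v) = B u - B v"
    proof -
      have "B u = B v + B (B v)" unfolding v[symmetric] using lin by (simp add: linear_add)
      then show ?thesis by simp
    qed
    have "B (B v) = lm *\<^sub>R B (B u) + \<mu> *\<^sub>R B u" unfolding w using lin by (simp add: linear_add linear_scale)
    then have e: "lm *\<^sub>R B (B u) + \<mu> *\<^sub>R B u = B u - (lm *\<^sub>R B u + \<mu> *\<^sub>R u)" using Bw w by simp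
    then have "lm *\<^sub>R B (B u) = B u - (lm *\<^sub>R B u + \<mu> *\<^sub>R u) - \<mu> *\<^sub>R B u" by (simp add: eq_diff_eq)
    then have e3: "lm *\<^sub>R B (B u) = (1 - lm - \<mu>) *\<^sub>R B u + (- \<mu>) *\<^sub>R u" by (simp add: algebra_simps)
    have "B (B u) = (1 / lm) *\<^sub>R (lm *\<^sub>R B (B u))" using lpos by simp
    also have "\<dots> = (1 / lm) *\<^sub>R ((1 - lm - \<mu>) *\<^sub>R B u + (- \<mu>) *\<^sub>R u)" unfolding e3 ..
    also have "\<dots> = (- \<mu> / lm) *\<^sub>R u + ((1 - lm - \<mu>) / lm) *\<^sub>R B u" by (simp add: scaleR_add_right scaleR_diff_right add.commute)
    finally have "B (B u) = (- \<mu> / lm) *\<^sub>R u + ((1 - lm - \<mu>) / lm) *\<^sub>R B u" .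
    then show "B (B u) \<in> span {u, B u}" by (rule span2')
  qed
qed


theorem proposition6p3:
  fixes B :: "'a::euclidean_space \<Rightarrow> 'a"
  assumes "linear B" and "even DIM('a)" and "no_real_eigenvalue B"
  shows "corresponds_to_great_circle_fibration B \<longleftrightarrow> invariant_on_planes B"
proof
  assume "corresponds_to_great_circle_fibration B"
  then show "invariant_on_planes B" by (rule forward[OF assms(1) assms(3)])
next
  assume "invariant_on_planes B"
  then obtain x y where "\<And>u. B (B u) = x *\<^sub>R u + y *\<^sub>R B u"
    using global_rel[OF assms(1) assms(3)] by blast
  then show "corresponds_to_great_circle_fibration B" by (rule backward_core[OF assms(1) assms(3)])
qed

end
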